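(* Fix a spatial point and let $W(x,y,t)$ be any given potential. Consider the source ODE $\frac{d\mathbf{u}}{dt}=\mathbf{s}(\mathbf{u})$ for the Ten-Moment equations. If $\mathbf{u}(t)\in\mathbb{U}_{\mathrm{ad}}$ at some time $t$, then $\mathbf{u}(t+\tau)\in\mathbb{U}_{\mathrm{ad}}$ for every $\tau\in\mathbb{R}$ (i.e. the exact solution of the source ODE is positivity preserving both forward and backward in time, without any restriction on $\tau$).
   Context: The two-dimensional Ten-Moment equations use the conservative variable $\mathbf{u}=(\rho,\rho v_1,\rho v_2,E_{11},E_{12},E_{22})^\top$, where $\rho$ is the density, $(v_1,v_2)$ the velocity, and $E_{11},E_{12},E_{22}$ the components of the symmetric energy tensor. The symmetric pressure tensor $\mathbf{p}$ is defined by $\mathbf{E}=\frac12(\mathbf{p}+\rho\mathbf{v}\otimes\mathbf{v})$, i.e. $p_{11}=2E_{11}-\rho v_1^2$, $p_{12}=2E_{12}-\rho v_1v_2$, $p_{22}=2E_{22}-\rho v_2^2$. The admissible set is $\mathbb{U}_{\mathrm{ad}}=\{\mathbf{u}\in\mathbb{R}^6:\rho(\mathbf{u})>0\text{ and }\mathbf{x}^\top\mathbf{p}(\mathbf{u})\mathbf{x}>0\ \forall\mathbf{x}\in\mathbb{R}^2\setminus\{0\}\}$. The source term arising from the body-force potential $W(x,y,t)$ is $\mathbf{s}(\mathbf{u})=\big(0,\,-\tfrac12\rho\partial_xW,\,-\tfrac12\rho\partial_yW,\,-\tfrac12\rho v_1\partial_xW,\,-\tfrac14\rho v_2\partial_xW-\tfrac14\rho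 v_1\partial_yW,\,-\tfrac12\rho v_2\partial_yW\big)^\top$. At a fixed spatial point, $\partial_xW,\partial_yW$ are given functions of $t$ only (assumed regular enough, e.g. locally integrable in $t$, for the linear ODE to be solvable). *)

theory Defs
  imports "HOL-Analysis.Analysis"
begin

text \<open>Conservative variables u = (rho, m1, m2, E11, E12, E22) with m_i = rho v_i.
  Velocity v_i = m_i / rho; pressure tensor p = 2E - rho v (x) v.\<close>

definition vel :: "real \<Rightarrow> real \<Rightarrow> real" where
  "vel rho m = m / rho"

definition p11 :: "real \<Rightarrow> real \<Rightarrow> real \<Rightarrow> real \<Rightarrow> real \<Rightarrow> real \<Rightarrow> real" where
  "p11 rho m1 m2 E11 E12 E22 = 2 * E11 - rho * (vel rho m1)^2"

definition p12 :: "real \<Rightarrow> real \<Rightarrow> real \<Rightarrow> real \<Rightarrow> real \<Rightarrow> real \<Rightarrow> real" where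
  "p12 rho m1 m2 E11 E12 E22 = 2 * E12 - rho * vel rho m1 * vel rho m2"

definition p22 :: "real \<Rightarrow> real \<Rightarrow> real \<Rightarrow> real \<Rightarrow> real \<Rightarrow> real \<Rightarrow> real" where
  "p22 rho m1 m2 E11 E12 E22 = 2 * E22 - rho * (vel rho m2)^2"

definition admissible :: "real \<Rightarrow> real \<Rightarrow> real \<Rightarrow> real \<Rightarrow> real \<Rightarrow> real \<Rightarrow> bool" where
  "admissible rho m1 m2 E11 E12 E22 \<longleftrightarrow> rho > 0 \<and>
     (\<forall>x1 x2::real. (x1, x2) \<noteq> (0, 0) \<longrightarrow>
        x1 * (p11 rho m1 m2 E11 E12 E22 * x1 + p12 rho m1 m2 E11 E12 E22 * x2)
      + x2 * (p12 rho m1 m2 E11 E12 E22 * x1 + p22 rho m1 m2 E11 E12 E22 * x2) > 0)"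

text \<open>Classical solution of du/dt = s(u) at a fixed spatial point, where Wx t, Wy t are
  the values of dW/dx, dW/dy at that point at time t.\<close>
definition source_solution ::
  "(real \<Rightarrow> real) \<Rightarrow> (real \<Rightarrow> real) \<Rightarrow> (real \<Rightarrow> real) \<Rightarrow> (real \<Rightarrow> real) \<Rightarrow>
   (real \<Rightarrow> real) \<Rightarrow> (real \<Rightarrow> real) \<Rightarrow> (real \<Rightarrow> real) \<Rightarrow> (real \<Rightarrow> real) \<Rightarrow> bool" where
  "source_solution Wx Wy rho m1 m2 E11 E12 E22 \<longleftrightarrow> (\<forall>t.
     (rho has_real_derivative 0) (at t) \<and>
     (m1 has_real_derivative (- (1/2) * rho t * Wx t)) (at t) \<and>
     (m2 has_real_derivative (- (1/2) * rho t * Wy t)) (at t) \<and>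
     (E11 has_real_derivative (- (1/2) * rho t * vel (rho t) (m1 t) * Wx t)) (at t) \<and>
     (E12 has_real_derivative (- (1/4) * rho t * vel (rho t) (m2 t) * Wx t
                               - (1/4) * rho t * vel (rho t) (m1 t) * Wy t)) (at t) \<and>
     (E22 has_real_derivative (- (1/2) * rho t * vel (rho t) (m2 t) * Wy t)) (at t))"

end

theory Submission
  imports Defs
begin

theorem lemma2:
  fixes Wx Wy rho m1 m2 E11 E12 E22 :: "real \<Rightarrow> real" and t :: real
  assumes "source_solution Wx Wy rho m1 m2 E11 E12 E22"
    and "admissible (rho t) (m1 t) (m2 t) (E11 t) (E12 t) (E22 t)"
  shows "\<forall>\<tau>::real. admissible (rho (t + \<tau>)) (m1 (t + \<tau>)) (m2 (t + \<tau>))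
                       (E11 (t + \<tau>)) (E12 (t + \<tau>)) (E22 (t + \<tau>))"
proof
  fix \<tau> :: real
  define s where "s = t + \<tau>"
  define c where "c = rho t"
  have S: "\<And>x. (rho has_real_derivative 0) (at x) \<and>
     (m1 has_real_derivative (- (1/2) * rho x * Wx x)) (at x) \<and>
     (m2 has_real_derivative (- (1/2) * rho x * Wy x)) (at x) \<and>
     (E11 has_real_derivative (- (1/2) * rho x * vel (rho x) (m1 x) * Wx x)) (at x) \<and>
     (E12 has_real_derivative (- (1/4) * rho x * vel (rho x) (m2 x) * Wx x
                               - (1/4) * rho x * vel (rho x) (m1 x) * Wy x)) (at x) \<and>
     (E22 has_real_derivative (- (1/2) * rho x * vel (rho x) (m2 x) * Wy x)) (at x)"
    using assms(1) unfolding source_solution_def by blast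
  have rc: "\<And>x. rho x = c" unfolding c_def
    using S by (metis DERIV_isconst_all)
  have cpos: "c > 0" using assms(2) unfolding admissible_def c_def by simp
  have d1: "((\<lambda>x. 2 * E11 x - (m1 x * m1 x) / c) has_real_derivative 0) (at x)" for x
  proof -
    have "((\<lambda>x. 2 * E11 x - (m1 x * m1 x) / c) has_real_derivative
       (2 * (- (1/2) * rho x * vel (rho x) (m1 x) * Wx x) - (m1 x * (- (1/2) * rho x * Wx x) + (- (1/2) * rho x * Wx x) * m1 x) / c)) (at x)"
      using S[of x] by (intro DERIV_diff DERIV_cmult DERIV_cdivide DERIV_mult') auto
    moreover have "(2 * (- (1/2) * rho x * vel (rho x) (m1 x) * Wx x) - (m1 x * (- (1/2) * rho x * Wx x) + (- (1/2) * rho x * Wx x) * m1 x) / c) = 0"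
      using cpos by (simp add: rc vel_def field_simps)
    ultimately show ?thesis by simp
  qed
  have d2: "((\<lambda>x. 2 * E22 x - (m2 x * m2 x) / c) has_real_derivative 0) (at x)" for x
  proof -
    have "((\<lambda>x. 2 * E22 x - (m2 x * m2 x) / c) has_real_derivative
       (2 * (- (1/2) * rho x * vel (rho x) (m2 x) * Wy x) - (m2 x * (- (1/2) * rho x * Wy x) + (- (1/2) * rho x * Wy x) * m2 x) / c)) (at x)"
      using S[of x] by (intro DERIV_diff DERIV_cmult DERIV_cdivide DERIV_mult') auto
    moreover have "(2 * (- (1/2) * rho x * vel (rho x) (m2 x) * Wy x) - (m2 x * (- (1/2) * rho x * Wy x) + (- (1/2) * rho x * Wy x) * m2 x) / c) = 0"
      using cpos by (simp add: rc vel_def field_simps)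
    ultimately show ?thesis by simp
  qed
  have d3: "((\<lambda>x. 2 * E12 x - (m1 x * m2 x) / c) has_real_derivative 0) (at x)" for x
  proof -
    have "((\<lambda>x. 2 * E12 x - (m1 x * m2 x) / c) has_real_derivative
       (2 * (- (1/4) * rho x * vel (rho x) (m2 x) * Wx x
                               - (1/4) * rho x * vel (rho x) (m1 x) * Wy x)
        - (m1 x * (- (1/2) * rho x * Wy x) + (- (1/2) * rho x * Wx x) * m2 x) / c)) (at x)"
      using S[of x] by (intro DERIV_diff DERIV_cmult DERIV_cdivide DERIV_mult') auto
    moreover have "(2 * (- (1/4) * rho x * vel (rho x) (m2 x) * Wx x
                               - (1/4) * rho x * vel (rho x) (m1 x) * Wy x)
        - (m1 x * (- (1/2) * rho x * Wy x) + (- (1/2) * rho x * Wx x) * m2 x) / c) = 0"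
      using cpos by (simp add: rc vel_def field_simps)
    ultimately show ?thesis by simp
  qed
  have e1: "2 * E11 s - (m1 s * m1 s) / c = 2 * E11 t - (m1 t * m1 t) / c"
    using DERIV_isconst_all[of _ s t] d1 by blast
  have e2: "2 * E22 s - (m2 s * m2 s) / c = 2 * E22 t - (m2 t * m2 t) / c"
    using DERIV_isconst_all[of _ s t] d2 by blast
  have e3: "2 * E12 s - (m1 s * m2 s) / c = 2 * E12 t - (m1 t * m2 t) / c"
    using DERIV_isconst_all[of _ s t] d3 by blast
  have P1: "p11 c (m1 s) (m2 s) (E11 s) (E12 s) (E22 s) = p11 c (m1 t) (m2 t) (E11 t) (E12 t) (E22 t)"
    using e1 cpos by (simp add: p11_def vel_def power2_eq_square)
  have P2: "p22 c (m1 s) (m2 s) (E11 s) (E12 s) (E22 s) = p22 c (m1 t) (m2 t) (E11 t) (E12 t) (E22 t)"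
    using e2 cpos by (simp add: p22_def vel_def power2_eq_square)
  have P3: "p12 c (m1 s) (m2 s) (E11 s) (E12 s) (E22 s) = p12 c (m1 t) (m2 t) (E11 t) (E12 t) (E22 t)"
    using e3 cpos by (simp add: p12_def vel_def)
  have "admissible c (m1 s) (m2 s) (E11 s) (E12 s) (E22 s)"
    using assms(2) unfolding admissible_def c_def[symmetric] using P1 P2 P3 by simp
  then show "admissible (rho (t + \<tau>)) (m1 (t + \<tau>)) (m2 (t + \<tau>))
                       (E11 (t + \<tau>)) (E12 (t + \<tau>)) (E22 (t + \<tau>))"
    using rc s_def by simp
qed

end
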